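(* Let $(Y,f)$ be an expansive dynamical system with expansiveness constant $\varepsilon_Y$, equipped with an adapted metric. Suppose $y_1\sim_{\mathrm{lcs}}y_2$ with stable local conjugacy $\gamma$. Given $0<\varepsilon\le\varepsilon_Y$, there exist $\delta>0$ and $N\in\mathbb{N}$ such that for every $n\ge N$ the stable local conjugacy \[ f^n\circ\gamma\circ f^{-n}:Y^u(f^n(y_1),\delta)\to Y^u(f^n(y_2),\varepsilon) \] from $f^n(y_1)$ to $f^n(y_2)$ is well defined (i.e. its image is contained in $Y^u(f^n(y_2),\varepsilon)$) and is given by $z\mapsto[z,f^n(y_2)]$ for $z\in Y^u(f^n(y_1),\delta)$.
   Context: $(Y,f)$: compact metric space with homeomorphism $f$; expansive with constant $\varepsilon_Y$: $d(f^ny,f^ny')\le\varepsilon_Y$ for all $n\in\mathbb{Z}$ implies $y=y'$. Local sets $Y^s(y,\varepsilon)=\{z:d(f^ny,f^nz)<\varepsilon\ \forall n\ge0\}$, $Y^u(y,\varepsilon)=\{z:d(f^{-n}y,f^{-n}z)<\varepsilon\ \forall n\ge0\}$; $Y^u(y)$ = unstable class ($d(f^{-n}y,f^{-n}z)\to0$). Bracket: $[a,b]$ is the unique point of $Y^s(a,\varepsilon)\cap Y^u(b,\varepsilon)$ when this is nonempty. Adapted metric: a compatible metric with $\eta>0$, $0<\lambda<1$ such that $f$ contracts by $\lambda$ on $Y^s(y,\eta)$ and $f^{-1}$ contracts by $\lambda$ on $Y^u(y,\eta)$. Stable local conjugacy from $y_1$ to $y_2$: a homeomorphism $\gamma:U\to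 V$ between open neighbourhoods $U\ni y_1$ in $Y^u(y_1)$ and $V\ni y_2$ in $Y^u(y_2)$ with $\gamma(y_1)=y_2$ and $\sup_{z\in U}d(f^kz,f^k\gamma(z))\to0$ as $k\to\infty$; $y_1\sim_{\mathrm{lcs}}y_2$ if one exists. *)

theory Defs
  imports "HOL-Analysis.Analysis"
begin

definition fpow :: "('a \<Rightarrow> 'a) \<Rightarrow> int \<Rightarrow> 'a \<Rightarrow> 'a" where
  "fpow f n = (if 0 \<le> n then f ^^ nat n else inv f ^^ nat (- n))"

definition expansive_const :: "('a::metric_space \<Rightarrow> 'a) \<Rightarrow> real \<Rightarrow> bool" where
  "expansive_const f e \<longleftrightarrow> 0 < e \<and>
     (\<forall>y y'. (\<forall>n::int. dist (fpow f n y) (fpow f n y') \<le> e) \<longrightarrow> y = y')"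

definition Ys :: "('a::metric_space \<Rightarrow> 'a) \<Rightarrow> 'a \<Rightarrow> real \<Rightarrow> 'a set" where
  "Ys f y e = {z. \<forall>n::nat. dist ((f ^^ n) y) ((f ^^ n) z) < e}"

definition Yu :: "('a::metric_space \<Rightarrow> 'a) \<Rightarrow> 'a \<Rightarrow> real \<Rightarrow> 'a set" where
  "Yu f y e = {z. \<forall>n::nat. dist ((inv f ^^ n) y) ((inv f ^^ n) z) < e}"

definition Yu_class :: "('a::metric_space \<Rightarrow> 'a) \<Rightarrow> 'a \<Rightarrow> 'a set" where
  "Yu_class f y = {z. (\<lambda>n. dist ((inv f ^^ n) y) ((inv f ^^ n) z)) \<longlonglongrightarrow> 0}"

definition bracket :: "('a::metric_space \<Rightarrow> 'a) \<Rightarrow> real \<Rightarrow> 'a \<Rightarrow> 'a \<Rightarrow> 'a" where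
  "bracket f e a b = (THE x. x \<in> Ys f a e \<inter> Yu f b e)"

definition adapted_metric :: "('a::metric_space \<Rightarrow> 'a) \<Rightarrow> bool" where
  "adapted_metric f \<longleftrightarrow> (\<exists>\<eta> lam. 0 < \<eta> \<and> 0 < lam \<and> lam < 1 \<and>
     (\<forall>y. \<forall>z\<in>Ys f y \<eta>. \<forall>z'\<in>Ys f y \<eta>. dist (f z) (f z') \<le> lam * dist z z') \<and>
     (\<forall>y. \<forall>z\<in>Yu f y \<eta>. \<forall>z'\<in>Yu f y \<eta>. dist (inv f z) (inv f z') \<le> lam * dist z z'))"

definition u_open :: "('a::metric_space \<Rightarrow> 'a) \<Rightarrow> 'a set \<Rightarrow> bool" where
  "u_open f U \<longleftrightarrow> (\<forall>z\<in>U. \<exists>e>0. Yu f z e \<subseteq> U)"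

definition u_continuous_on :: "('a::metric_space \<Rightarrow> 'a) \<Rightarrow> 'a set \<Rightarrow> ('a \<Rightarrow> 'a) \<Rightarrow> bool" where
  "u_continuous_on f U g \<longleftrightarrow>
     (\<forall>z\<in>U. \<forall>e>0. \<exists>d>0. \<forall>w\<in>U \<inter> Yu f z d. g w \<in> Yu f (g z) e)"

definition stable_local_conj ::
  "('a::metric_space \<Rightarrow> 'a) \<Rightarrow> 'a \<Rightarrow> 'a \<Rightarrow> 'a set \<Rightarrow> 'a set \<Rightarrow> ('a \<Rightarrow> 'a) \<Rightarrow> bool" where
  "stable_local_conj f y1 y2 U V \<gamma> \<longleftrightarrow>
     y1 \<in> U \<and> U \<subseteq> Yu_class f y1 \<and> u_open f U \<and>
     y2 \<in> V \<and> V \<subseteq> Yu_class f y2 \<and> u_open f V \<and>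
     bij_betw \<gamma> U V \<and> u_continuous_on f U \<gamma> \<and> u_continuous_on f V (inv_into U \<gamma>) \<and>
     \<gamma> y1 = y2 \<and>
     (\<forall>e>0. \<exists>K. \<forall>k\<ge>K. \<forall>z\<in>U. dist ((f ^^ k) z) ((f ^^ k) (\<gamma> z)) < e)"

end

theory Submission imports Defs begin

lemma cancel_pow:
  fixes g h :: "'a \<Rightarrow> 'a"
  assumes "\<And>x. g (h x) = x"
  shows "(g ^^ n) ((h ^^ n) x) = x"
proof (induction n arbitrary: x)
  case 0 show ?case by (simp only: funpow_0)
next
  case (Suc n)
  have "(g ^^ Suc n) ((h ^^ Suc n) x) = (g ^^ n) (g (h ((h ^^ n) x)))"
    by (simp add: funpow_swap1)
  also have "\<dots> = x" using assms Suc by simp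
  finally show ?case .
qed

lemma cancel_pow_le:
  fixes g h :: "'a \<Rightarrow> 'a"
  assumes "\<And>x. g (h x) = x" "m \<le> n"
  shows "(g ^^ (n - m)) ((h ^^ n) x) = (h ^^ m) x"
proof -
  have "(h ^^ n) x = (h ^^ (n - m)) ((h ^^ m) x)"
    using assms(2) by (metis funpow_add le_add_diff_inverse2 comp_apply)
  then show ?thesis using cancel_pow[of g h] assms(1) by simp
qed

lemma cancel_pow_ge:
  fixes g h :: "'a \<Rightarrow> 'a"
  assumes "\<And>x. g (h x) = x" "n \<le> k"
  shows "(g ^^ k) ((h ^^ n) x) = (g ^^ (k - n)) x"
proof -
  have "(g ^^ k) = (g ^^ (k - n)) \<circ> (g ^^ n)"
    using assms(2) by (metis funpow_add le_add_diff_inverse2)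
  then show ?thesis using cancel_pow[of g h] assms(1) by simp
qed

lemma fpow_add:
  assumes "bij f"
  shows "fpow f a (fpow f b x) = fpow f (a + b) x"
proof -
  have gf: "\<And>x. inv f (f x) = x" using assms by (simp add: bij_is_inj)
  have fg: "\<And>x. f (inv f x) = x" using assms by (simp add: bij_is_surj surj_f_inv_f)
  show ?thesis
  proof (cases "0 \<le> a")
    case a: True
    show ?thesis
    proof (cases "0 \<le> b")
      case True
      then show ?thesis using a unfolding fpow_def
        by (simp add: nat_add_distrib funpow_add)
    next
      case b: False
      show ?thesis
      proof (cases "nat a \<ge> nat (-b)")
        case True
        then have "(f ^^ nat a) ((inv f ^^ nat (-b)) x) = (f ^^ (nat a - nat (-b))) x"
          using cancel_pow_ge[of f "inv f", OF fg] by blast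
        moreover have "nat (a + b) = nat a - nat (-b)" "0 \<le> a + b" using a b True by auto
        ultimately show ?thesis using a b unfolding fpow_def by simp
      next
        case False
        then have "(f ^^ nat a) ((inv f ^^ nat (-b)) x) = (inv f ^^ (nat (-b) - nat a)) x"
        proof -
          have "(inv f ^^ nat (-b)) x = (inv f ^^ nat a) ((inv f ^^ (nat (-b) - nat a)) x)"
            using False by (metis funpow_add le_add_diff_inverse nat_le_linear comp_apply)
          then show ?thesis using cancel_pow[of f "inv f", OF fg] by simp
        qed
        moreover have "nat (-(a + b)) = nat (-b) - nat a" "\<not> 0 \<le> a + b" using a b False by auto
        ultimately show ?thesis using a b unfolding fpow_def by simp
      qed
    qed
  next
    case a: False
    show ?thesis
    proof (cases "0 \<le> b")
      case b: True
      show ?thesis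
      proof (cases "nat (-a) \<ge> nat b")
        case True
        then have "(inv f ^^ nat (-a)) ((f ^^ nat b) x) = (inv f ^^ (nat (-a) - nat b)) x"
          using cancel_pow_ge[of "inv f" f, OF gf] by blast
        moreover have "nat (-(a + b)) = nat (-a) - nat b" "(0 \<le> a + b) = (a + b = 0)" using a b True by auto
        ultimately show ?thesis using a b unfolding fpow_def by auto
      next
        case False
        then have "(inv f ^^ nat (-a)) ((f ^^ nat b) x) = (f ^^ (nat b - nat (-a))) x"
        proof -
          have "(f ^^ nat b) x = (f ^^ nat (-a)) ((f ^^ (nat b - nat (-a))) x)"
            using False by (metis funpow_add le_add_diff_inverse nat_le_linear comp_apply)
          then show ?thesis using cancel_pow[of "inv f" f, OF gf] by simp
        qed
        moreover have "nat (a + b) = nat b - nat (-a)" "0 \<le> a + b" using a b False by auto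
        ultimately show ?thesis using a b unfolding fpow_def by simp
      qed
    next
      case False
      then have "nat (- (a + b)) = nat (-a) + nat (-b)" using a by simp
      then show ?thesis using a False unfolding fpow_def
        by (simp add: funpow_add)
    qed
  qed
qed

lemma isCont_funpow:
  assumes "continuous_on UNIV (g :: 'a::metric_space \<Rightarrow> 'a)"
  shows "isCont (g ^^ k) x"
proof (induction k arbitrary: x)
  case 0 show ?case by (simp add: id_def)
next
  case (Suc k)
  have "isCont g ((g ^^ k) x)" using assms continuous_on_eq_continuous_at by blast
  then have "isCont (g \<circ> (g ^^ k)) x" using Suc continuous_at_compose by blast
  then show ?case by (metis funpow.simps(2))
qed

lemma isCont_fpow:
  fixes n :: int
  assumes "continuous_on UNIV (f :: 'a::metric_space \<Rightarrow> 'a)" "continuous_on UNIV (inv f)"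
  shows "isCont (fpow f n) x"
  unfolding fpow_def using isCont_funpow[OF assms(1)] isCont_funpow[OF assms(2)] by simp

lemma expansive_bigger:
  fixes f :: "'a::metric_space \<Rightarrow> 'a"
  assumes cpt: "compact (UNIV :: 'a set)" and bij: "bij f"
    and cf: "continuous_on UNIV f" and ci: "continuous_on UNIV (inv f)"
    and ex: "expansive_const f c"
  shows "\<exists>c'>c. expansive_const f c'"
proof (rule ccontr)
  assume nc: "\<not> (\<exists>c'>c. expansive_const f c')"
  have c0: "0 < c" using ex unfolding expansive_const_def by simp
  have "\<exists>q. c < dist (fst q) (snd q) \<and>
      (\<forall>m. dist (fpow f m (fst q)) (fpow f m (snd q)) \<le> c + inverse (real (Suc j)))" for j
  proof -
    define c' where "c' = c + inverse (real (Suc j))"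
    have "c < c'" unfolding c'_def by simp
    then have "\<not> expansive_const f c'" using nc by blast
    then obtain x y where xy: "\<forall>n. dist (fpow f n x) (fpow f n y) \<le> c'" "x \<noteq> y"
      unfolding expansive_const_def using \<open>c < c'\<close> c0 by auto
    then obtain n where n: "\<not> dist (fpow f n x) (fpow f n y) \<le> c"
      using ex unfolding expansive_const_def by blast
    show ?thesis
    proof (intro exI[of _ "(fpow f n x, fpow f n y)"] conjI allI)
      show "c < dist (fst (fpow f n x, fpow f n y)) (snd (fpow f n x, fpow f n y))" using n by simp
      fix m
      show "dist (fpow f m (fst (fpow f n x, fpow f n y))) (fpow f m (snd (fpow f n x, fpow f n y)))
         \<le> c + inverse (real (Suc j))"
        using xy(1)[rule_format, of "m + n"] fpow_add[OF bij] unfolding c'_def by simp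
    qed
  qed
  then obtain p where p: "\<And>j. c < dist (fst (p j)) (snd (p j))"
     "\<And>j m. dist (fpow f m (fst (p j))) (fpow f m (snd (p j))) \<le> c + inverse (real (Suc j))"
    by metis
  have "compact (UNIV :: ('a \<times> 'a) set)"
    using compact_Times[OF cpt cpt] by simp
  then have "seq_compact (UNIV :: ('a \<times> 'a) set)" by (rule compact_imp_seq_compact)
  then obtain l r where r: "strict_mono (r :: nat \<Rightarrow> nat)" "(p \<circ> r) \<longlonglongrightarrow> l"
    using seq_compactE[of UNIV p] by blast
  have fl: "(\<lambda>j. fst (p (r j))) \<longlonglongrightarrow> fst l" using tendsto_fst[OF r(2)] by (simp add: comp_def)
  have sl: "(\<lambda>j. snd (p (r j))) \<longlonglongrightarrow> snd l" using tendsto_snd[OF r(2)] by (simp add: comp_def)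
  have lim: "(\<lambda>j. dist (fpow f m (fst (p (r j)))) (fpow f m (snd (p (r j)))))
     \<longlonglongrightarrow> dist (fpow f m (fst l)) (fpow f m (snd l))" for m :: int
    by (intro tendsto_dist isCont_tendsto_compose[OF isCont_fpow[OF cf ci]] fl sl)
  have "dist (fpow f m (fst l)) (fpow f m (snd l)) \<le> c" for m :: int
  proof (rule LIMSEQ_le[OF lim[of m] LIMSEQ_inverse_real_of_nat_add[of c]])
    show "\<exists>N. \<forall>n\<ge>N. dist (fpow f m (fst (p (r n)))) (fpow f m (snd (p (r n)))) \<le> c + inverse (real (Suc n))"
    proof (intro exI allI impI)
      fix n
      have "n \<le> r n" using seq_suble[OF r(1)] by simp
      then have "inverse (real (Suc (r n))) \<le> inverse (real (Suc n))"
        by (simp add: le_imp_inverse_le)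
      then show "dist (fpow f m (fst (p (r n)))) (fpow f m (snd (p (r n)))) \<le> c + inverse (real (Suc n))"
        using p(2)[where j="r n" and m=m] by linarith
    qed
  qed
  then have eq: "fst l = snd l" using ex unfolding expansive_const_def by blast
  have "c \<le> dist (fst l) (snd l)"
    using lim[of 0] p(1) by (intro LIMSEQ_le_const[of _ _ c]) (auto simp: fpow_def less_imp_le)
  then show False using eq c0 by simp
qed


lemma cancel_pow_le2:
  fixes g h :: "'a \<Rightarrow> 'a"
  assumes "\<And>x. g (h x) = x" "m \<le> n"
  shows "(g ^^ m) ((h ^^ n) x) = (h ^^ (n - m)) x"
proof -
  have "(h ^^ n) x = (h ^^ m) ((h ^^ (n - m)) x)"
    using assms(2) by (metis funpow_add le_add_diff_inverse comp_apply)
  then show ?thesis using cancel_pow[of g h] assms(1) by simp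
qed

lemma small_iter:
  fixes f :: "'a::metric_space \<Rightarrow> 'a"
  assumes "continuous_on UNIV f" "0 < e"
  shows "\<exists>\<rho>>0. \<forall>a. dist a y < \<rho> \<longrightarrow> (\<forall>m<K. dist ((f ^^ m) y) ((f ^^ m) a) < e)"
proof (induction K)
  case 0 show ?case by (intro exI[of _ 1]) auto
next
  case (Suc K)
  then obtain \<rho>1 where r1: "\<rho>1 > 0" "\<forall>a. dist a y < \<rho>1 \<longrightarrow> (\<forall>m<K. dist ((f ^^ m) y) ((f ^^ m) a) < e)"
    by blast
  have "continuous (at y) (f ^^ K)" using isCont_funpow[OF assms(1)] by simp
  then obtain \<rho>2 where r2: "\<rho>2 > 0" "\<forall>a. dist a y < \<rho>2 \<longrightarrow> dist ((f ^^ K) a) ((f ^^ K) y) < e"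
    using assms(2) unfolding continuous_at_eps_delta by blast
  show ?case
  proof (intro exI[of _ "min \<rho>1 \<rho>2"] conjI allI impI)
    show "0 < min \<rho>1 \<rho>2" using r1 r2 by simp
    fix a m assume a: "dist a y < min \<rho>1 \<rho>2" and m: "m < Suc K"
    show "dist ((f ^^ m) y) ((f ^^ m) a) < e"
    proof (cases "m = K")
      case True then show ?thesis using r2 a by (simp add: dist_commute)
    next
      case False then show ?thesis using r1 a m by simp
    qed
  qed
qed

lemma Yu_mono: "a \<le> b \<Longrightarrow> Yu f y a \<subseteq> Yu f y b"
  unfolding Yu_def by (auto intro: less_le_trans)

lemma Ys_mono: "a \<le> b \<Longrightarrow> Ys f y a \<subseteq> Ys f y b"
  unfolding Ys_def by (auto intro: less_le_trans)

theorem mainTheorem5: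
  fixes f :: "'a::metric_space \<Rightarrow> 'a" and y1 y2 :: 'a and U V :: "'a set"
    and \<gamma> :: "'a \<Rightarrow> 'a" and \<epsilon>Y \<epsilon> :: real
  assumes "compact (UNIV :: 'a set)"
    and "bij f" and "continuous_on UNIV f" and "continuous_on UNIV (inv f)"
    and "expansive_const f \<epsilon>Y"
    and "adapted_metric f"
    and "stable_local_conj f y1 y2 U V \<gamma>"
    and "0 < \<epsilon>" and "\<epsilon> \<le> \<epsilon>Y"
  shows "\<exists>\<delta>>0. \<exists>N::nat. \<forall>n\<ge>N. \<forall>z\<in>Yu f (fpow f (int n) y1) \<delta>.
           fpow f (- int n) z \<in> U \<and>
           fpow f (int n) (\<gamma> (fpow f (- int n) z)) \<in> Yu f (fpow f (int n) y2) \<epsilon> \<and>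
           fpow f (int n) (\<gamma> (fpow f (- int n) z)) \<in> Ys f z \<epsilon> \<and>
           fpow f (int n) (\<gamma> (fpow f (- int n) z)) = bracket f \<epsilon> z (fpow f (int n) y2)"
proof -
  define g where "g = inv f"
  have gf: "\<And>x. g (f x) = x" using assms(2) unfolding g_def by (simp add: bij_is_inj)
  have fg: "\<And>x. f (g x) = x" using assms(2) unfolding g_def by (simp add: bij_is_surj surj_f_inv_f)
  have y1U: "y1 \<in> U" and uo: "u_open f U" and uc: "u_continuous_on f U \<gamma>" and gy: "\<gamma> y1 = y2"
    and unif: "\<forall>e>0. \<exists>K. \<forall>k\<ge>K. \<forall>z\<in>U. dist ((f ^^ k) z) ((f ^^ k) (\<gamma> z)) < e"
    using assms(7) unfolding stable_local_conj_def by auto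
  obtain c' where c': "c' > \<epsilon>Y" "expansive_const f c'"
    using expansive_bigger[OF assms(1-5)] by blast
  define e2 where "e2 = min \<epsilon> (c' - \<epsilon>Y)"
  have e2: "0 < e2" "e2 \<le> \<epsilon>" "\<epsilon> + e2 \<le> c'" using c' assms(8,9) unfolding e2_def by auto
  define e3 where "e3 = e2 / 3"
  have e3: "0 < e3" "e3 + e3 + e3 = e2" using e2 unfolding e3_def by auto
  obtain K where K: "\<And>k z. k \<ge> K \<Longrightarrow> z \<in> U \<Longrightarrow> dist ((f ^^ k) z) ((f ^^ k) (\<gamma> z)) < e3"
    using unif e3(1) by blast
  obtain \<rho> where \<rho>: "\<rho> > 0" "\<And>a m. dist a y2 < \<rho> \<Longrightarrow> m < K \<Longrightarrow> dist ((f ^^ m) y2) ((f ^^ m) a) < e2"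
    using small_iter[OF assms(3) e2(1), of y2 K] by blast
  define e4 where "e4 = min e2 \<rho>"
  have e4: "0 < e4" "e4 \<le> e2" "e4 \<le> \<rho>" using e2 \<rho> unfolding e4_def by auto
  obtain d4 where d4: "d4 > 0" "\<And>w. w \<in> U \<inter> Yu f y1 d4 \<Longrightarrow> \<gamma> w \<in> Yu f y2 e4"
    using uc y1U e4(1) gy unfolding u_continuous_on_def by metis
  obtain e0 where e0: "e0 > 0" "Yu f y1 e0 \<subseteq> U"
    using uo y1U unfolding u_open_def by blast
  define \<delta> where "\<delta> = min e0 (min d4 e3)"
  have \<delta>: "0 < \<delta>" "\<delta> \<le> e0" "\<delta> \<le> d4" "\<delta> \<le> e3" using e0 d4 e3 unfolding \<delta>_def by auto
  have main: "(g ^^ n) z \<in> U \<and>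
           (f ^^ n) (\<gamma> ((g ^^ n) z)) \<in> Yu f ((f ^^ n) y2) \<epsilon> \<and>
           (f ^^ n) (\<gamma> ((g ^^ n) z)) \<in> Ys f z \<epsilon> \<and>
           (f ^^ n) (\<gamma> ((g ^^ n) z)) = bracket f \<epsilon> z ((f ^^ n) y2)"
    if n: "n \<ge> K" and z: "z \<in> Yu f ((f ^^ n) y1) \<delta>" for n z
  proof -
    have hz: "\<And>k. dist ((g ^^ k) ((f ^^ n) y1)) ((g ^^ k) z) < \<delta>"
      using z unfolding Yu_def g_def by simp
    define u where "u = (g ^^ n) z"
    have uYu: "u \<in> Yu f y1 \<delta>"
      unfolding Yu_def g_def[symmetric]
    proof (intro CollectI allI)
      fix k
      have "(g ^^ (k + n)) ((f ^^ n) y1) = (g ^^ k) y1"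
        using cancel_pow_ge[of g f, OF gf, of n "k + n"] by simp
      moreover have "(g ^^ (k + n)) z = (g ^^ k) u" unfolding u_def by (simp add: funpow_add)
      ultimately show "dist ((g ^^ k) y1) ((g ^^ k) u) < \<delta>" using hz[of "k + n"] by simp
    qed
    have hb: "dist ((f ^^ m) y1) ((f ^^ m) u) < \<delta>" if "m \<le> n" for m
    proof -
      have "(g ^^ (n - m)) ((f ^^ n) y1) = (f ^^ m) y1" using cancel_pow_le[where g=g and h=f, OF gf that] .
      moreover have "(f ^^ m) u = (g ^^ (n - m)) z" unfolding u_def using cancel_pow_le2[where g=f and h=g, OF fg that] .
      ultimately show ?thesis using hz[of "n - m"] by simp
    qed
    have uU: "u \<in> U" using subsetD[OF Yu_mono[OF \<delta>(2)] uYu] e0(2) by (rule subsetD[rotated])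
    have guYu: "\<gamma> u \<in> Yu f y2 e4" using d4(2) uU uYu Yu_mono[OF \<delta>(3)] by blast
    have gu0: "dist y2 (\<gamma> u) < e4" using guYu unfolding Yu_def by (metis (mono_tags) mem_Collect_eq funpow_0)
    define w where "w = (f ^^ n) (\<gamma> u)"
    have wYs: "w \<in> Ys f z e2"
      unfolding Ys_def
    proof (intro CollectI allI)
      fix k
      have "(f ^^ k) z = (f ^^ (k + n)) u"
        unfolding u_def by (simp add: funpow_add cancel_pow[of f g, OF fg])
      moreover have "(f ^^ k) w = (f ^^ (k + n)) (\<gamma> u)" unfolding w_def by (simp add: funpow_add)
      ultimately show "dist ((f ^^ k) z) ((f ^^ k) w) < e2"
        using K[of "k + n" u] n uU e3 by simp
    qed
    have C: "dist ((f ^^ m) y2) ((f ^^ m) (\<gamma> u)) < e2" if m: "m \<le> n" for m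
    proof (cases "m \<ge> K")
      case True
      have "dist ((f ^^ m) y2) ((f ^^ m) (\<gamma> u)) \<le>
          dist ((f ^^ m) y2) ((f ^^ m) y1) + dist ((f ^^ m) y1) ((f ^^ m) u) + dist ((f ^^ m) u) ((f ^^ m) (\<gamma> u))"
        using dist_triangle[of "(f ^^ m) y2" "(f ^^ m) (\<gamma> u)" "(f ^^ m) y1"]
          dist_triangle[of "(f ^^ m) y1" "(f ^^ m) (\<gamma> u)" "(f ^^ m) u"] by linarith
      moreover have "dist ((f ^^ m) y2) ((f ^^ m) y1) < e3"
        using K[OF True y1U] gy by (simp add: dist_commute)
      moreover have "dist ((f ^^ m) y1) ((f ^^ m) u) < e3" using hb[OF m] \<delta>(4) by simp
      moreover have "dist ((f ^^ m) u) ((f ^^ m) (\<gamma> u)) < e3" using K[OF True uU] .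
      ultimately show ?thesis using e3(2) by linarith
    next
      case False
      have "dist (\<gamma> u) y2 < \<rho>" using gu0 e4(3) by (simp add: dist_commute)
      then show ?thesis using \<rho>(2) False by simp
    qed
    have wYu: "w \<in> Yu f ((f ^^ n) y2) e2"
      unfolding Yu_def g_def[symmetric]
    proof (intro CollectI allI)
      fix k
      show "dist ((g ^^ k) ((f ^^ n) y2)) ((g ^^ k) w) < e2"
      proof (cases "k \<le> n")
        case True
        have "(g ^^ k) ((f ^^ n) y2) = (f ^^ (n - k)) y2" "(g ^^ k) w = (f ^^ (n - k)) (\<gamma> u)"
          unfolding w_def by (rule cancel_pow_le2[where g=g and h=f, OF gf True])+
        then show ?thesis using C[of "n - k"] by simp
      next
        case False
        have nk: "n \<le> k" using False by simp
        have "(g ^^ k) ((f ^^ n) y2) = (g ^^ (k - n)) y2" "(g ^^ k) w = (g ^^ (k - n)) (\<gamma> u)"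
          unfolding w_def by (rule cancel_pow_ge[where g=g and h=f and n=n and k=k, OF gf nk])+
        moreover have "dist ((g ^^ (k - n)) y2) ((g ^^ (k - n)) (\<gamma> u)) < e4"
          using guYu unfolding Yu_def g_def by simp
        ultimately show ?thesis using e4(2) by simp
      qed
    qed
    have uniq: "x = w" if x: "x \<in> Ys f z \<epsilon> \<inter> Yu f ((f ^^ n) y2) \<epsilon>" for x
    proof -
      have "\<forall>j::int. dist (fpow f j x) (fpow f j w) \<le> c'"
      proof
        fix j :: int
        show "dist (fpow f j x) (fpow f j w) \<le> c'"
        proof (cases "0 \<le> j")
          case True
          let ?k = "nat j"
          have "dist ((f ^^ ?k) x) ((f ^^ ?k) w) \<le> dist ((f ^^ ?k) z) ((f ^^ ?k) x) + dist ((f ^^ ?k) z) ((f ^^ ?k) w)"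
            by (rule dist_triangle3)
          moreover have "dist ((f ^^ ?k) z) ((f ^^ ?k) x) < \<epsilon>" using x unfolding Ys_def by simp
          moreover have "dist ((f ^^ ?k) z) ((f ^^ ?k) w) < e2" using wYs unfolding Ys_def by simp
          ultimately show ?thesis using True e2(3) unfolding fpow_def by simp
        next
          case False
          let ?k = "nat (- j)"
          let ?p = "(f ^^ n) y2"
          have "dist ((g ^^ ?k) x) ((g ^^ ?k) w) \<le> dist ((g ^^ ?k) ?p) ((g ^^ ?k) x) + dist ((g ^^ ?k) ?p) ((g ^^ ?k) w)"
            by (rule dist_triangle3)
          moreover have "dist ((g ^^ ?k) ?p) ((g ^^ ?k) x) < \<epsilon>" using x unfolding Yu_def g_def by simp
          moreover have "dist ((g ^^ ?k) ?p) ((g ^^ ?k) w) < e2" using wYu unfolding Yu_def g_def by simp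
          ultimately show ?thesis using False e2(3) unfolding fpow_def g_def by simp
        qed
      qed
      then show ?thesis using c'(2) unfolding expansive_const_def by blast
    qed
    have wYs': "w \<in> Ys f z \<epsilon>" by (rule subsetD[OF Ys_mono[OF e2(2)] wYs])
    have wYu': "w \<in> Yu f ((f ^^ n) y2) \<epsilon>" by (rule subsetD[OF Yu_mono[OF e2(2)] wYu])
    have "bracket f \<epsilon> z ((f ^^ n) y2) = w"
      unfolding bracket_def by (rule the_equality[where P="\<lambda>x. x \<in> Ys f z \<epsilon> \<inter> Yu f ((f ^^ n) y2) \<epsilon>", OF IntI[OF wYs' wYu'] uniq])
    then show ?thesis using uU wYs' wYu' unfolding u_def[symmetric] w_def[symmetric] by simp
  qed
  have R: "\<forall>n\<ge>K. \<forall>z\<in>Yu f (fpow f (int n) y1) \<delta>.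
           fpow f (- int n) z \<in> U \<and>
           fpow f (int n) (\<gamma> (fpow f (- int n) z)) \<in> Yu f (fpow f (int n) y2) \<epsilon> \<and>
           fpow f (int n) (\<gamma> (fpow f (- int n) z)) \<in> Ys f z \<epsilon> \<and>
           fpow f (int n) (\<gamma> (fpow f (- int n) z)) = bracket f \<epsilon> z (fpow f (int n) y2)"
  proof (intro allI impI ballI)
    fix n z assume n: "K \<le> n" and z: "z \<in> Yu f (fpow f (int n) y1) \<delta>"
    have fp1: "fpow f (int n) = f ^^ n" by (simp add: fpow_def)
    have fp2: "fpow f (- int n) = g ^^ n" by (cases "n = 0") (simp_all add: fpow_def g_def)
    show "fpow f (- int n) z \<in> U \<and>
           fpow f (int n) (\<gamma> (fpow f (- int n) z)) \<in> Yu f (fpow f (int n) y2) \<epsilon> \<and>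
           fpow f (int n) (\<gamma> (fpow f (- int n) z)) \<in> Ys f z \<epsilon> \<and>
           fpow f (int n) (\<gamma> (fpow f (- int n) z)) = bracket f \<epsilon> z (fpow f (int n) y2)"
      unfolding fp1 fp2 by (rule main[OF n z[unfolded fp1]])
  qed
  show ?thesis using R \<delta>(1) by blast
qed

end
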